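(* Let $(\mathcal{N},P_S)$ be any channel with state, fix $0\in\mathcal{S}$, and let $M\ge2$, $n\in\mathbb{N}$. Then $\eta^{\mathrm{NS},\mathrm{ca}}_{\mathrm{opt},M,n}(\mathcal{N},P_S)$ equals the optimal value of the following linear program in variables $r_{x^n,y^n,s^n}$ ($x^n\in\mathcal{X}^n,y^n\in\mathcal{Y}^n,s^n\in\mathcal{S}^n$) and $q_{x^n\mid s^n}$ ($x^n\in\mathcal{X}^n,s^n\in\mathcal{S}^n$): maximize $\sum_{x^n,y^n,s^n} r_{x^n,y^n,s^n}\,P_S^{\otimes n}(s^n)\,\mathcal{N}^{\otimes n}(y^n\mid x^n,s^n)$ subject to (i) $r_{x^n,y^n,s^n}\ge0$ for all $(x^n,y^n,s^n)$; (ii) $\sum_{x^n}r_{x^n,y^n,s^n}=\frac1M$ for all $(s^n,y^n)$; (iii) $\sum_{x^n}q_{x^n\mid s^n}=1$ for all $s^n$; (iv) $r_{x^n,y^n,s^n}\le q_{x^n\mid s^n}$ for all $(x^n,y^n,s^n)$; (v) for all $i\in[n-1]$ and all $(x^i,y^n,s^n)$: $\sum_{x_{i+1}^n}r_{x^n,y^n,(s^i,s_{i+1}^n)}=\sum_{x_{i+1}^n}r_{x^n,y^n,(s^i,0^{n-i})}$; (vi) for all $i\in[n-1]$ and all $(x^i,s^n)$: $\sum_{x_{i+1}^n}q_{x^n\mid(s^i,s_{i+1}^n)}=\sum_{x_{i+1}^n}q_{x^n\mid(s^i,0^{n-i})}$, where $0^{k}$ denotes the all-zero sequence of length $k$ and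 in (v),(vi) the sums run over $x_{i+1}^n$ with $x^i$ fixed.
   Context: A channel with state $(\mathcal{N},P_S)$ consists of finite sets $\mathcal{X},\mathcal{Y},\mathcal{S}$, a conditional distribution $\mathcal{N}(y\mid x,s)$ and a state distribution $P_S$; $P_S^{\otimes n}(s^n)=\prod_iP_S(s_i)$, $\mathcal{N}^{\otimes n}(y^n\mid x^n,s^n)=\prod_i\mathcal{N}(y_i\mid x_i,s_i)$. Notation: $x^i=(x_1,\dots,x_i)$, $x_{i+1}^n=(x_{i+1},\dots,x_n)$, $[M]=\{1,\dots,M\}$. An NS-assisted coding scheme with causal CSIT with message size $M$ and blocklength $n$ is a conditional distribution $Z(x^n,\hat w\mid w,s^n,y^n)$ on $\mathcal{X}^n\times[M]$ given $(w,s^n,y^n)\in[M]\times\mathcal{S}^n\times\mathcal{Y}^n$ such that: (C1) $\sum_{\hat w}Z(x^n,\hat w\mid w,s^n,y^n)$ does not depend on $y^n$; (C2) $\sum_{x^n}Z(x^n,\hat w\mid w,s^n,y^n)$ does not depend on $(w,s^n)$; (C3) for each $i\in[n-1]$, $\sum_{x_{i+1}^n}Z(x^n,\hat w\mid w,s^n,y^n)$ does not depend on $s_{i+1}^n$. Its success probability is $\eta(Z)=\frac1M\sum_w\sum_{x^n,s^n,y^n}P_S^{\otimes n}(s^n)\mathcal{N}^{\otimes n}(y^n\mid x^n,s^n)Z(x^n,w\mid w,s^n,y^n)$, and $\eta^{\mathrm{NS},\mathrm{ca}}_{\mathrm{opt},M,n}(\mathcal{N},P_S)$ is the supremum of $\eta(Z)$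 over all such schemes. *)

theory Defs
  imports Complex_Main
begin

text \<open>Sequences of length n over a finite alphabet are lists of length n.
  A channel N(y|x,s) is a function N y x s; a state distribution is P_S.
  Messages range over [M] = {1..M}.\<close>

definition seqs :: "nat \<Rightarrow> 'a list set" where
  "seqs n = {xs. length xs = n}"

definition is_channel_with_state ::
  "('y::finite \<Rightarrow> 'x::finite \<Rightarrow> 's::finite \<Rightarrow> real) \<Rightarrow> ('s \<Rightarrow> real) \<Rightarrow> bool" where
  "is_channel_with_state N PS \<longleftrightarrow>
     (\<forall>y x s. 0 \<le> N y x s) \<and> (\<forall>x s. (\<Sum>y\<in>UNIV. N y x s) = 1) \<and>
     (\<forall>s. 0 \<le> PS s) \<and> (\<Sum>s\<in>UNIV. PS s) = 1"

definition state_n :: "('s \<Rightarrow> real) \<Rightarrow> 's list \<Rightarrow> real" where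
  "state_n PS ss = (\<Prod>i<length ss. PS (ss ! i))"

definition chan_n :: "('y \<Rightarrow> 'x \<Rightarrow> 's \<Rightarrow> real) \<Rightarrow> 'y list \<Rightarrow> 'x list \<Rightarrow> 's list \<Rightarrow> real" where
  "chan_n N ys xs ss = (\<Prod>i<length ys. N (ys ! i) (xs ! i) (ss ! i))"

text \<open>NS-assisted coding scheme with causal CSIT: Z xs wh w ss ys = Z(x^n, wh | w, s^n, y^n).\<close>
definition ns_ca_scheme ::
  "nat \<Rightarrow> nat \<Rightarrow> ('x::finite list \<Rightarrow> nat \<Rightarrow> nat \<Rightarrow> 's::finite list \<Rightarrow> 'y::finite list \<Rightarrow> real) \<Rightarrow> bool" where
  "ns_ca_scheme M n Z \<longleftrightarrow>
     (\<forall>xs\<in>seqs n. \<forall>wh\<in>{1..M}. \<forall>w\<in>{1..M}. \<forall>ss\<in>seqs n. \<forall>ys\<in>seqs n. 0 \<le> Z xs wh w ss ys) \<and>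
     (\<forall>w\<in>{1..M}. \<forall>ss\<in>seqs n. \<forall>ys\<in>seqs n.
        (\<Sum>xs\<in>seqs n. \<Sum>wh\<in>{1..M}. Z xs wh w ss ys) = 1) \<and>
     \<comment> \<open>(C1)\<close>
     (\<forall>xs\<in>seqs n. \<forall>w\<in>{1..M}. \<forall>ss\<in>seqs n. \<forall>ys\<in>seqs n. \<forall>ys'\<in>seqs n.
        (\<Sum>wh\<in>{1..M}. Z xs wh w ss ys) = (\<Sum>wh\<in>{1..M}. Z xs wh w ss ys')) \<and>
     \<comment> \<open>(C2)\<close>
     (\<forall>wh\<in>{1..M}. \<forall>w\<in>{1..M}. \<forall>w'\<in>{1..M}. \<forall>ss\<in>seqs n. \<forall>ss'\<in>seqs n. \<forall>ys\<in>seqs n.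
        (\<Sum>xs\<in>seqs n. Z xs wh w ss ys) = (\<Sum>xs\<in>seqs n. Z xs wh w' ss' ys)) \<and>
     \<comment> \<open>(C3): for i in [n-1], the sum over x_{i+1}^n (with x^i = a fixed) depends on s^n only via s^i\<close>
     (\<forall>i\<in>{1..n-1}. \<forall>a\<in>seqs i. \<forall>wh\<in>{1..M}. \<forall>w\<in>{1..M}. \<forall>ss\<in>seqs n. \<forall>ss'\<in>seqs n. \<forall>ys\<in>seqs n.
        take i ss = take i ss' \<longrightarrow>
        (\<Sum>xs\<in>{xs\<in>seqs n. take i xs = a}. Z xs wh w ss ys) =
        (\<Sum>xs\<in>{xs\<in>seqs n. take i xs = a}. Z xs wh w ss' ys))"

definition success_prob ::
  "nat \<Rightarrow> nat \<Rightarrow> ('y::finite \<Rightarrow> 'x::finite \<Rightarrow> 's::finite \<Rightarrow> real) \<Rightarrow> ('s \<Rightarrow> real) \<Rightarrow>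
   ('x list \<Rightarrow> nat \<Rightarrow> nat \<Rightarrow> 's list \<Rightarrow> 'y list \<Rightarrow> real) \<Rightarrow> real" where
  "success_prob M n N PS Z = (1 / real M) * (\<Sum>w\<in>{1..M}. \<Sum>xs\<in>seqs n. \<Sum>ss\<in>seqs n. \<Sum>ys\<in>seqs n.
      state_n PS ss * chan_n N ys xs ss * Z xs w w ss ys)"

definition eta_opt_ns_ca ::
  "nat \<Rightarrow> nat \<Rightarrow> ('y::finite \<Rightarrow> 'x::finite \<Rightarrow> 's::finite \<Rightarrow> real) \<Rightarrow> ('s \<Rightarrow> real) \<Rightarrow> real" where
  "eta_opt_ns_ca M n N PS =
     Sup (success_prob M n N PS ` {Z :: 'x list \<Rightarrow> nat \<Rightarrow> nat \<Rightarrow> 's list \<Rightarrow> 'y list \<Rightarrow> real. ns_ca_scheme M n Z})"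

text \<open>The linear program; s0 is the distinguished state 0.\<close>
definition lp_feasible ::
  "nat \<Rightarrow> nat \<Rightarrow> 's::finite \<Rightarrow> ('x::finite list \<Rightarrow> 'y::finite list \<Rightarrow> 's list \<Rightarrow> real) \<Rightarrow> ('x list \<Rightarrow> 's list \<Rightarrow> real) \<Rightarrow> bool" where
  "lp_feasible M n s0 r q \<longleftrightarrow>
     (\<forall>xs\<in>seqs n. \<forall>ys\<in>seqs n. \<forall>ss\<in>seqs n. 0 \<le> r xs ys ss) \<and>
     (\<forall>ss\<in>seqs n. \<forall>ys\<in>seqs n. (\<Sum>xs\<in>seqs n. r xs ys ss) = 1 / real M) \<and>
     (\<forall>ss\<in>seqs n. (\<Sum>xs\<in>seqs n. q xs ss) = 1) \<and>
     (\<forall>xs\<in>seqs n. \<forall>ys\<in>seqs n. \<forall>ss\<in>seqs n. r xs ys ss \<le> q xs ss) \<and>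
     (\<forall>i\<in>{1..n-1}. \<forall>a\<in>seqs i. \<forall>ys\<in>seqs n. \<forall>ss\<in>seqs n.
        (\<Sum>xs\<in>{xs\<in>seqs n. take i xs = a}. r xs ys ss) =
        (\<Sum>xs\<in>{xs\<in>seqs n. take i xs = a}. r xs ys (take i ss @ replicate (n - i) s0))) \<and>
     (\<forall>i\<in>{1..n-1}. \<forall>a\<in>seqs i. \<forall>ss\<in>seqs n.
        (\<Sum>xs\<in>{xs\<in>seqs n. take i xs = a}. q xs ss) =
        (\<Sum>xs\<in>{xs\<in>seqs n. take i xs = a}. q xs (take i ss @ replicate (n - i) s0)))"

definition lp_objective ::
  "nat \<Rightarrow> ('y::finite \<Rightarrow> 'x::finite \<Rightarrow> 's::finite \<Rightarrow> real) \<Rightarrow> ('s \<Rightarrow> real) \<Rightarrow>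
   ('x list \<Rightarrow> 'y list \<Rightarrow> 's list \<Rightarrow> real) \<Rightarrow> real" where
  "lp_objective n N PS r = (\<Sum>xs\<in>seqs n. \<Sum>ys\<in>seqs n. \<Sum>ss\<in>seqs n.
      r xs ys ss * state_n PS ss * chan_n N ys xs ss)"

definition lp_value ::
  "nat \<Rightarrow> nat \<Rightarrow> 's::finite \<Rightarrow> ('y::finite \<Rightarrow> 'x::finite \<Rightarrow> 's \<Rightarrow> real) \<Rightarrow> ('s \<Rightarrow> real) \<Rightarrow> real" where
  "lp_value M n s0 N PS =
     Sup ((\<lambda>(r, q). lp_objective n N PS r) `
          {(r :: 'x list \<Rightarrow> 'y list \<Rightarrow> 's list \<Rightarrow> real, q :: 'x list \<Rightarrow> 's list \<Rightarrow> real). lp_feasible M n s0 r q})"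

end

theory Submission
  imports Defs
begin

lemma finite_seqs: "finite (seqs n :: ('a::finite) list set)"
proof -
  have "seqs n = {xs::'a list. set xs \<subseteq> UNIV \<and> length xs = n}" by (simp add: seqs_def)
  then show ?thesis using finite_lists_length_eq[of "UNIV::'a set" n] by simp
qed

lemma pad_seqs:
  assumes "ss \<in> seqs n" "i \<in> {1..n-1}"
  shows "take i ss @ replicate (n - i) s0 \<in> seqs n"
    and "take i (take i ss @ replicate (n - i) s0) = take i ss"
  using assms by (auto simp: seqs_def)

lemma dir1:
  fixes Z :: "'x::finite list \<Rightarrow> nat \<Rightarrow> nat \<Rightarrow> 's::finite list \<Rightarrow> 'y::finite list \<Rightarrow> real"
  assumes Z: "ns_ca_scheme M n Z" and M: "M \<ge> 2"
  shows "\<exists>r q. lp_feasible M n s0 r q \<and> success_prob M n N PS Z = lp_objective n N PS r"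
proof -
  note fin = finite_seqs
  note Zu = Z[unfolded ns_ca_scheme_def]
  note H1 = Zu[THEN conjunct1] and H2 = Zu[THEN conjunct2, THEN conjunct1]
    and H3 = Zu[THEN conjunct2, THEN conjunct2, THEN conjunct1]
    and H4 = Zu[THEN conjunct2, THEN conjunct2, THEN conjunct2, THEN conjunct1]
    and H5 = Zu[THEN conjunct2, THEN conjunct2, THEN conjunct2, THEN conjunct2]
  have nn: "\<And>xs wh w ss ys. xs\<in>seqs n \<Longrightarrow> wh\<in>{1..M} \<Longrightarrow> w\<in>{1..M} \<Longrightarrow> ss\<in>seqs n \<Longrightarrow> ys\<in>seqs n \<Longrightarrow> 0 \<le> Z xs wh w ss ys"
    using H1 by blast
  have norm: "\<And>w ss ys. w\<in>{1..M} \<Longrightarrow> ss\<in>seqs n \<Longrightarrow> ys\<in>seqs n \<Longrightarrow> (\<Sum>xs\<in>seqs n. \<Sum>wh\<in>{1..M}. Z xs wh w ss ys) = 1"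
    using H2 by blast
  have C1: "\<And>xs w ss ys ys'. xs\<in>seqs n \<Longrightarrow> w\<in>{1..M} \<Longrightarrow> ss\<in>seqs n \<Longrightarrow> ys\<in>seqs n \<Longrightarrow> ys'\<in>seqs n \<Longrightarrow>
        (\<Sum>wh\<in>{1..M}. Z xs wh w ss ys) = (\<Sum>wh\<in>{1..M}. Z xs wh w ss ys')"
    using H3 by blast
  have C2: "\<And>wh w w' ss ss' ys. wh\<in>{1..M} \<Longrightarrow> w\<in>{1..M} \<Longrightarrow> w'\<in>{1..M} \<Longrightarrow> ss\<in>seqs n \<Longrightarrow> ss'\<in>seqs n \<Longrightarrow> ys\<in>seqs n \<Longrightarrow>
        (\<Sum>xs\<in>seqs n. Z xs wh w ss ys) = (\<Sum>xs\<in>seqs n. Z xs wh w' ss' ys)"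
    using H4 by blast
  have C3: "\<And>i a wh w ss ss' ys. i\<in>{1..n-1} \<Longrightarrow> a\<in>seqs i \<Longrightarrow> wh\<in>{1..M} \<Longrightarrow> w\<in>{1..M} \<Longrightarrow> ss\<in>seqs n \<Longrightarrow> ss'\<in>seqs n \<Longrightarrow> ys\<in>seqs n \<Longrightarrow>
        take i ss = take i ss' \<Longrightarrow>
        (\<Sum>xs\<in>{xs\<in>seqs n. take i xs = a}. Z xs wh w ss ys) =
        (\<Sum>xs\<in>{xs\<in>seqs n. take i xs = a}. Z xs wh w ss' ys)"
    using H5 by blast
  define y0 :: "'y list" where "y0 = replicate n undefined"
  have y0: "y0 \<in> seqs n" by (simp add: y0_def seqs_def)
  define r where "r xs ys ss = (1 / real M) * (\<Sum>w\<in>{1..M}. Z xs w w ss ys)" for xs ys ss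
  define q where "q xs ss = (1 / real M) * (\<Sum>w\<in>{1..M}. \<Sum>wh\<in>{1..M}. Z xs wh w ss y0)" for xs ss
  have M1: "(1::nat) \<in> {1..M}" using M by simp
  have Mpos: "real M > 0" using M by simp
  have f1: "\<forall>xs\<in>seqs n. \<forall>ys\<in>seqs n. \<forall>ss\<in>seqs n. 0 \<le> r xs ys ss"
    unfolding r_def using nn by (auto intro!: divide_nonneg_nonneg sum_nonneg)
  have f2: "\<forall>ss\<in>seqs n. \<forall>ys\<in>seqs n. (\<Sum>xs\<in>seqs n. r xs ys ss) = 1 / real M"
  proof (intro ballI)
    fix ss :: "'s list" and ys :: "'y list" assume ss: "ss \<in> seqs n" and ys: "ys \<in> seqs n"
    have "(\<Sum>xs\<in>seqs n. r xs ys ss) = (1 / real M) * (\<Sum>w\<in>{1..M}. \<Sum>xs\<in>seqs n. Z xs w w ss ys)"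
      unfolding r_def by (simp add: sum_divide_distrib[symmetric] sum_distrib_left[symmetric] sum.swap[of _ "seqs n"])
    also have "\<dots> = (1 / real M) * (\<Sum>w\<in>{1..M}. \<Sum>xs\<in>seqs n. Z xs w 1 ss ys)"
      by (rule arg_cong[where f="\<lambda>t. (1 / real M) * t"], rule sum.cong[OF refl], rule C2[OF _ _ M1 ss ss ys]) auto
    also have "\<dots> = (1 / real M) * (\<Sum>xs\<in>seqs n. \<Sum>w\<in>{1..M}. Z xs w 1 ss ys)"
      by (simp add: sum.swap[of _ "seqs n"])
    also have "\<dots> = 1 / real M" using norm[OF M1 ss ys] by simp
    finally show "(\<Sum>xs\<in>seqs n. r xs ys ss) = 1 / real M" .
  qed
  have f3: "\<forall>ss\<in>seqs n. (\<Sum>xs\<in>seqs n. q xs ss) = 1"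
  proof
    fix ss :: "'s list" assume ss: "ss \<in> seqs n"
    have "(\<Sum>xs\<in>seqs n. q xs ss) = (1 / real M) * (\<Sum>w\<in>{1..M}. \<Sum>xs\<in>seqs n. \<Sum>wh\<in>{1..M}. Z xs wh w ss y0)"
      unfolding q_def by (simp add: sum_divide_distrib[symmetric] sum_distrib_left[symmetric] sum.swap[of _ "seqs n"])
    also have "\<dots> = (1 / real M) * (\<Sum>w\<in>{1..M}. 1)"
      using norm[OF _ ss y0] by simp
    also have "\<dots> = 1" using Mpos by simp
    finally show "(\<Sum>xs\<in>seqs n. q xs ss) = 1" .
  qed
  have f4: "\<forall>xs\<in>seqs n. \<forall>ys\<in>seqs n. \<forall>ss\<in>seqs n. r xs ys ss \<le> q xs ss"
  proof (intro ballI)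
    fix xs :: "'x list" and ys :: "'y list" and ss :: "'s list" assume xs: "xs \<in> seqs n" and ys: "ys \<in> seqs n" and ss: "ss \<in> seqs n"
    have "(\<Sum>w\<in>{1..M}. Z xs w w ss ys) \<le> (\<Sum>w\<in>{1..M}. \<Sum>wh\<in>{1..M}. Z xs wh w ss ys)"
    proof (rule sum_mono)
      fix w assume w: "w \<in> {1..M}"
      show "Z xs w w ss ys \<le> (\<Sum>wh\<in>{1..M}. Z xs wh w ss ys)"
        by (rule member_le_sum[OF w]) (use nn xs w ss ys in auto)
    qed
    also have "\<dots> = (\<Sum>w\<in>{1..M}. \<Sum>wh\<in>{1..M}. Z xs wh w ss y0)"
      using C1[OF xs _ ss ys y0] by simp
    finally show "r xs ys ss \<le> q xs ss" unfolding r_def q_def using Mpos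
      by (simp add: divide_right_mono)
  qed
  have f5: "\<forall>i\<in>{1..n-1}. \<forall>a\<in>seqs i. \<forall>ys\<in>seqs n. \<forall>ss\<in>seqs n.
        (\<Sum>xs\<in>{xs\<in>seqs n. take i xs = a}. r xs ys ss) =
        (\<Sum>xs\<in>{xs\<in>seqs n. take i xs = a}. r xs ys (take i ss @ replicate (n - i) s0))"
  proof (intro ballI)
    fix i :: nat and a :: "'x list" and ys :: "'y list" and ss :: "'s list" assume i: "i \<in> {1..n-1}" and a: "a \<in> seqs i" and ys: "ys \<in> seqs n" and ss: "ss \<in> seqs n"
    note p = pad_seqs[OF ss i, of s0]
    have "\<And>w. w \<in> {1..M} \<Longrightarrow> (\<Sum>xs\<in>{xs\<in>seqs n. take i xs = a}. Z xs w w ss ys) =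
        (\<Sum>xs\<in>{xs\<in>seqs n. take i xs = a}. Z xs w w (take i ss @ replicate (n - i) s0) ys)"
      using C3[OF i a _ _ ss p(1) ys] p(2) by simp
    note hw = this
    have h: "(\<Sum>w\<in>{1..M}. \<Sum>xs\<in>{xs\<in>seqs n. take i xs = a}. Z xs w w ss ys) =
        (\<Sum>w\<in>{1..M}. \<Sum>xs\<in>{xs\<in>seqs n. take i xs = a}. Z xs w w (take i ss @ replicate (n - i) s0) ys)"
      by (rule sum.cong[OF refl], erule hw)
    have sw: "\<And>t. (\<Sum>xs\<in>{xs\<in>seqs n. take i xs = a}. r xs ys t) =
        (1 / real M) * (\<Sum>w\<in>{1..M}. \<Sum>xs\<in>{xs\<in>seqs n. take i xs = a}. Z xs w w t ys)"
      unfolding r_def sum_distrib_left[symmetric] by (rule arg_cong[where f="\<lambda>t. (1 / real M) * t"], rule sum.swap)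
    show "(\<Sum>xs\<in>{xs\<in>seqs n. take i xs = a}. r xs ys ss) =
        (\<Sum>xs\<in>{xs\<in>seqs n. take i xs = a}. r xs ys (take i ss @ replicate (n - i) s0))"
      unfolding sw h ..
  qed
  have f6: "\<forall>i\<in>{1..n-1}. \<forall>a\<in>seqs i. \<forall>ss\<in>seqs n.
        (\<Sum>xs\<in>{xs\<in>seqs n. take i xs = a}. q xs ss) =
        (\<Sum>xs\<in>{xs\<in>seqs n. take i xs = a}. q xs (take i ss @ replicate (n - i) s0))"
  proof (intro ballI)
    fix i :: nat and a :: "'x list" and ss :: "'s list" assume i: "i \<in> {1..n-1}" and a: "a \<in> seqs i" and ss: "ss \<in> seqs n"
    note p = pad_seqs[OF ss i, of s0]
    have "\<And>w wh. w \<in> {1..M} \<Longrightarrow> wh \<in> {1..M} \<Longrightarrow> (\<Sum>xs\<in>{xs\<in>seqs n. take i xs = a}. Z xs wh w ss y0) =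
        (\<Sum>xs\<in>{xs\<in>seqs n. take i xs = a}. Z xs wh w (take i ss @ replicate (n - i) s0) y0)"
      using C3[OF i a _ _ ss p(1) y0] p(2) by simp
    note hw = this
    have hw2: "\<And>w. w \<in> {1..M} \<Longrightarrow> (\<Sum>xs\<in>{xs\<in>seqs n. take i xs = a}. \<Sum>wh\<in>{1..M}. Z xs wh w ss y0) =
        (\<Sum>xs\<in>{xs\<in>seqs n. take i xs = a}. \<Sum>wh\<in>{1..M}. Z xs wh w (take i ss @ replicate (n - i) s0) y0)"
    proof -
      fix w :: nat assume w: "w \<in> {1..M}"
      have "(\<Sum>wh\<in>{1..M}. \<Sum>xs\<in>{xs\<in>seqs n. take i xs = a}. Z xs wh w ss y0) =
        (\<Sum>wh\<in>{1..M}. \<Sum>xs\<in>{xs\<in>seqs n. take i xs = a}. Z xs wh w (take i ss @ replicate (n - i) s0) y0)"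
        by (rule sum.cong[OF refl], rule hw[OF w])
      then show "?thesis w" by (simp only: sum.swap[of _ "{1..M}"])
    qed
    have h: "(\<Sum>w\<in>{1..M}. \<Sum>xs\<in>{xs\<in>seqs n. take i xs = a}. \<Sum>wh\<in>{1..M}. Z xs wh w ss y0) =
        (\<Sum>w\<in>{1..M}. \<Sum>xs\<in>{xs\<in>seqs n. take i xs = a}. \<Sum>wh\<in>{1..M}. Z xs wh w (take i ss @ replicate (n - i) s0) y0)"
      by (rule sum.cong[OF refl], erule hw2)
    have sw: "\<And>t. (\<Sum>xs\<in>{xs\<in>seqs n. take i xs = a}. q xs t) =
        (1 / real M) * (\<Sum>w\<in>{1..M}. \<Sum>xs\<in>{xs\<in>seqs n. take i xs = a}. \<Sum>wh\<in>{1..M}. Z xs wh w t y0)"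
      unfolding q_def sum_distrib_left[symmetric] by (rule arg_cong[where f="\<lambda>t. (1 / real M) * t"], rule sum.swap)
    show "(\<Sum>xs\<in>{xs\<in>seqs n. take i xs = a}. q xs ss) =
        (\<Sum>xs\<in>{xs\<in>seqs n. take i xs = a}. q xs (take i ss @ replicate (n - i) s0))"
      unfolding sw h ..
  qed
  have feas: "lp_feasible M n s0 r q"
    unfolding lp_feasible_def using f1 f2 f3 f4 f5 f6 by blast
  define f where "f w xs ss ys = state_n PS ss * chan_n N ys xs ss * Z xs w w ss ys" for w xs ss ys
  have e1: "lp_objective n N PS r = (1 / real M) * (\<Sum>xs\<in>seqs n. \<Sum>ys\<in>seqs n. \<Sum>ss\<in>seqs n. \<Sum>w\<in>{1..M}. f w xs ss ys)"
    unfolding lp_objective_def r_def f_def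
    by (simp add: sum_distrib_left sum_distrib_right mult_ac)
  have e2: "(\<Sum>xs\<in>seqs n. \<Sum>ys\<in>seqs n. \<Sum>ss\<in>seqs n. \<Sum>w\<in>{1..M}. f w xs ss ys)
      = (\<Sum>xs\<in>seqs n. \<Sum>w\<in>{1..M}. \<Sum>ys\<in>seqs n. \<Sum>ss\<in>seqs n. f w xs ss ys)"
  proof (rule sum.cong[OF refl])
    fix xs
    have "(\<Sum>ys\<in>seqs n. \<Sum>ss\<in>seqs n. \<Sum>w\<in>{1..M}. f w xs ss ys)
        = (\<Sum>ys\<in>seqs n. \<Sum>w\<in>{1..M}. \<Sum>ss\<in>seqs n. f w xs ss ys)"
      by (rule sum.cong[OF refl], rule sum.swap)
    also have "\<dots> = (\<Sum>w\<in>{1..M}. \<Sum>ys\<in>seqs n. \<Sum>ss\<in>seqs n. f w xs ss ys)"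
      by (rule sum.swap)
    finally show "(\<Sum>ys\<in>seqs n. \<Sum>ss\<in>seqs n. \<Sum>w\<in>{1..M}. f w xs ss ys)
        = (\<Sum>w\<in>{1..M}. \<Sum>ys\<in>seqs n. \<Sum>ss\<in>seqs n. f w xs ss ys)" .
  qed
  have e3: "(\<Sum>xs\<in>seqs n. \<Sum>w\<in>{1..M}. \<Sum>ys\<in>seqs n. \<Sum>ss\<in>seqs n. f w xs ss ys)
      = (\<Sum>w\<in>{1..M}. \<Sum>xs\<in>seqs n. \<Sum>ys\<in>seqs n. \<Sum>ss\<in>seqs n. f w xs ss ys)"
    by (rule sum.swap)
  have e4: "(\<Sum>w\<in>{1..M}. \<Sum>xs\<in>seqs n. \<Sum>ys\<in>seqs n. \<Sum>ss\<in>seqs n. f w xs ss ys)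
      = (\<Sum>w\<in>{1..M}. \<Sum>xs\<in>seqs n. \<Sum>ss\<in>seqs n. \<Sum>ys\<in>seqs n. f w xs ss ys)"
    by (rule sum.cong[OF refl], rule sum.cong[OF refl], rule sum.swap)
  have obj: "success_prob M n N PS Z = lp_objective n N PS r"
    unfolding e1 e2 e3 e4 by (simp add: success_prob_def f_def)
  show ?thesis using feas obj by blast
qed


lemma sum_if_eq:
  assumes "w \<in> {1..M}"
  shows "(\<Sum>wh\<in>{1..M}. if wh = w then (a::real) else b) = a + (real M - 1) * b"
proof -
  have "(\<Sum>wh\<in>{1..M}. if wh = w then (a::real) else b) =
      (if w = w then a else b) + (\<Sum>wh\<in>{1..M} - {w}. if wh = w then a else b)"
    using assms by (subst sum.remove[of _ w]) auto
  also have "(\<Sum>wh\<in>{1..M} - {w}. if wh = w then a else b) = (\<Sum>wh\<in>{1..M} - {w}. b)"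
    by (rule sum.cong) auto
  also have "\<dots> = real (M - 1) * b" using assms by simp
  also have "real (M - 1) = real M - 1" using assms by auto
  finally show ?thesis by simp
qed

lemma dir2:
  fixes r :: "'x::finite list \<Rightarrow> 'y::finite list \<Rightarrow> 's::finite list \<Rightarrow> real" and q :: "'x list \<Rightarrow> 's list \<Rightarrow> real"
  assumes F: "lp_feasible M n s0 r q" and M: "M \<ge> 2"
  shows "\<exists>Z. ns_ca_scheme M n Z \<and> success_prob M n N PS Z = lp_objective n N PS r"
proof -
  note Fu = F[unfolded lp_feasible_def]
  note G1 = Fu[THEN conjunct1] and G2 = Fu[THEN conjunct2, THEN conjunct1]
    and G3 = Fu[THEN conjunct2, THEN conjunct2, THEN conjunct1]
    and G4 = Fu[THEN conjunct2, THEN conjunct2, THEN conjunct2, THEN conjunct1]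
    and G5 = Fu[THEN conjunct2, THEN conjunct2, THEN conjunct2, THEN conjunct2, THEN conjunct1]
    and G6 = Fu[THEN conjunct2, THEN conjunct2, THEN conjunct2, THEN conjunct2, THEN conjunct2]
  have rnn: "\<And>xs ys ss. xs\<in>seqs n \<Longrightarrow> ys\<in>seqs n \<Longrightarrow> ss\<in>seqs n \<Longrightarrow> 0 \<le> r xs ys ss"
    using G1 by blast
  have rsum: "\<And>ss ys. ss\<in>seqs n \<Longrightarrow> ys\<in>seqs n \<Longrightarrow> (\<Sum>xs\<in>seqs n. r xs ys ss) = 1 / real M"
    using G2 by blast
  have qsum: "\<And>ss. ss\<in>seqs n \<Longrightarrow> (\<Sum>xs\<in>seqs n. q xs ss) = 1"
    using G3 by blast
  have rq: "\<And>xs ys ss. xs\<in>seqs n \<Longrightarrow> ys\<in>seqs n \<Longrightarrow> ss\<in>seqs n \<Longrightarrow> r xs ys ss \<le> q xs ss"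
    using G4 by blast
  have rv: "\<And>i a ys ss. i\<in>{1..n-1} \<Longrightarrow> a\<in>seqs i \<Longrightarrow> ys\<in>seqs n \<Longrightarrow> ss\<in>seqs n \<Longrightarrow>
        (\<Sum>xs\<in>{xs\<in>seqs n. take i xs = a}. r xs ys ss) =
        (\<Sum>xs\<in>{xs\<in>seqs n. take i xs = a}. r xs ys (take i ss @ replicate (n - i) s0))"
    using G5 by blast
  have qv: "\<And>i a ss. i\<in>{1..n-1} \<Longrightarrow> a\<in>seqs i \<Longrightarrow> ss\<in>seqs n \<Longrightarrow>
        (\<Sum>xs\<in>{xs\<in>seqs n. take i xs = a}. q xs ss) =
        (\<Sum>xs\<in>{xs\<in>seqs n. take i xs = a}. q xs (take i ss @ replicate (n - i) s0))"
    using G6 by blast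
  define c where "c = real M - 1"
  have c: "c > 0" using M by (simp add: c_def)
  have Mpos: "real M > 0" using M by simp
  define Z where "Z xs wh w ss ys = (if wh = w then r xs ys ss else (q xs ss - r xs ys ss) / c)"
    for xs :: "'x list" and wh w :: nat and ss :: "'s list" and ys :: "'y list"
  have Zrow: "\<And>xs w ss ys. w \<in> {1..M} \<Longrightarrow> (\<Sum>wh\<in>{1..M}. Z xs wh w ss ys) = q xs ss"
  proof -
    fix xs :: "'x list" and w :: nat and ss :: "'s list" and ys :: "'y list" assume w: "w \<in> {1..M}"
    have "(\<Sum>wh\<in>{1..M}. Z xs wh w ss ys) = r xs ys ss + c * ((q xs ss - r xs ys ss) / c)"
      unfolding Z_def using sum_if_eq[OF w] by (simp add: c_def)
    also have "\<dots> = q xs ss" using c by simp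
    finally show "(\<Sum>wh\<in>{1..M}. Z xs wh w ss ys) = q xs ss" .
  qed
  have s1: "\<forall>xs\<in>seqs n. \<forall>wh\<in>{1..M}. \<forall>w\<in>{1..M}. \<forall>ss\<in>seqs n. \<forall>ys\<in>seqs n. 0 \<le> Z xs wh w ss ys"
    unfolding Z_def using rnn rq c by (auto intro!: divide_nonneg_pos)
  have s2: "\<forall>w\<in>{1..M}. \<forall>ss\<in>seqs n. \<forall>ys\<in>seqs n.
        (\<Sum>xs\<in>seqs n. \<Sum>wh\<in>{1..M}. Z xs wh w ss ys) = 1"
    using Zrow qsum by simp
  have s3: "\<forall>xs\<in>seqs n. \<forall>w\<in>{1..M}. \<forall>ss\<in>seqs n. \<forall>ys\<in>seqs n. \<forall>ys'\<in>seqs n.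
        (\<Sum>wh\<in>{1..M}. Z xs wh w ss ys) = (\<Sum>wh\<in>{1..M}. Z xs wh w ss ys')"
    using Zrow by simp
  have col: "\<And>wh w ss ys. ss\<in>seqs n \<Longrightarrow> ys\<in>seqs n \<Longrightarrow> (\<Sum>xs\<in>seqs n. Z xs wh w ss ys) = 1 / real M"
  proof -
    fix wh w :: nat and ss :: "'s list" and ys :: "'y list" assume ss: "ss \<in> seqs n" and ys: "ys \<in> seqs n"
    show "(\<Sum>xs\<in>seqs n. Z xs wh w ss ys) = 1 / real M"
    proof (cases "wh = w")
      case True then show ?thesis unfolding Z_def using rsum[OF ss ys] by simp
    next
      case False
      then have "(\<Sum>xs\<in>seqs n. Z xs wh w ss ys) = (1 - 1 / real M) / c"
        unfolding Z_def using rsum[OF ss ys] qsum[OF ss]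
        by (simp add: sum_divide_distrib[symmetric] sum_subtractf)
      also have "\<dots> = 1 / real M" using c Mpos unfolding c_def by (simp add: field_simps)
      finally show ?thesis .
    qed
  qed
  have s4: "\<forall>wh\<in>{1..M}. \<forall>w\<in>{1..M}. \<forall>w'\<in>{1..M}. \<forall>ss\<in>seqs n. \<forall>ss'\<in>seqs n. \<forall>ys\<in>seqs n.
        (\<Sum>xs\<in>seqs n. Z xs wh w ss ys) = (\<Sum>xs\<in>seqs n. Z xs wh w' ss' ys)"
    using col by simp
  have s5: "\<forall>i\<in>{1..n-1}. \<forall>a\<in>seqs i. \<forall>wh\<in>{1..M}. \<forall>w\<in>{1..M}. \<forall>ss\<in>seqs n. \<forall>ss'\<in>seqs n. \<forall>ys\<in>seqs n.
        take i ss = take i ss' \<longrightarrow>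
        (\<Sum>xs\<in>{xs\<in>seqs n. take i xs = a}. Z xs wh w ss ys) =
        (\<Sum>xs\<in>{xs\<in>seqs n. take i xs = a}. Z xs wh w ss' ys)"
  proof (intro ballI impI)
    fix i wh w :: nat and a :: "'x list" and ss ss' :: "'s list" and ys :: "'y list"
    assume i: "i\<in>{1..n-1}" and a: "a\<in>seqs i" and ss: "ss\<in>seqs n" and ss': "ss'\<in>seqs n"
      and ys: "ys\<in>seqs n" and t: "take i ss = take i ss'"
    define A where "A = {xs\<in>seqs n. take i xs = a}"
    have R: "(\<Sum>xs\<in>A. r xs ys ss) = (\<Sum>xs\<in>A. r xs ys ss')"
      unfolding A_def using rv[OF i a ys ss] rv[OF i a ys ss'] t by simp
    have Q: "(\<Sum>xs\<in>A. q xs ss) = (\<Sum>xs\<in>A. q xs ss')"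
      unfolding A_def using qv[OF i a ss] qv[OF i a ss'] t by simp
    have e: "\<And>t. (\<Sum>xs\<in>A. Z xs wh w t ys) =
        (if wh = w then (\<Sum>xs\<in>A. r xs ys t) else ((\<Sum>xs\<in>A. q xs t) - (\<Sum>xs\<in>A. r xs ys t)) / c)"
      unfolding Z_def by (simp add: sum_divide_distrib[symmetric] sum_subtractf)
    show "(\<Sum>xs\<in>{xs\<in>seqs n. take i xs = a}. Z xs wh w ss ys) =
        (\<Sum>xs\<in>{xs\<in>seqs n. take i xs = a}. Z xs wh w ss' ys)"
      unfolding A_def[symmetric] e R Q ..
  qed
  have sch: "ns_ca_scheme M n Z"
    unfolding ns_ca_scheme_def using s1 s2 s3 s4 s5 by blast
  define g where "g xs ss ys = state_n PS ss * chan_n N ys xs ss * r xs ys ss" for xs ss ys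
  have "success_prob M n N PS Z = (1 / real M) * (\<Sum>w\<in>{1..M}. \<Sum>xs\<in>seqs n. \<Sum>ss\<in>seqs n. \<Sum>ys\<in>seqs n. g xs ss ys)"
    unfolding success_prob_def Z_def g_def by simp
  also have "\<dots> = (\<Sum>xs\<in>seqs n. \<Sum>ss\<in>seqs n. \<Sum>ys\<in>seqs n. g xs ss ys)"
    using Mpos by simp
  also have "\<dots> = (\<Sum>xs\<in>seqs n. \<Sum>ys\<in>seqs n. \<Sum>ss\<in>seqs n. g xs ss ys)"
    by (rule sum.cong[OF refl], rule sum.swap)
  also have "\<dots> = lp_objective n N PS r"
    unfolding lp_objective_def g_def by (simp add: mult_ac)
  finally show ?thesis using sch by blast
qed

theorem mainTheorem3:
  fixes N :: "'y::finite \<Rightarrow> 'x::finite \<Rightarrow> 's::finite \<Rightarrow> real"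
    and PS :: "'s \<Rightarrow> real" and s0 :: 's and M n :: nat
  assumes "is_channel_with_state N PS"
    and "M \<ge> 2"
  shows "eta_opt_ns_ca M n N PS = lp_value M n s0 N PS"
proof -
  have "success_prob M n N PS ` {Z :: 'x list \<Rightarrow> nat \<Rightarrow> nat \<Rightarrow> 's list \<Rightarrow> 'y list \<Rightarrow> real. ns_ca_scheme M n Z}
      = (\<lambda>(r, q). lp_objective n N PS r) `
          {(r :: 'x list \<Rightarrow> 'y list \<Rightarrow> 's list \<Rightarrow> real, q :: 'x list \<Rightarrow> 's list \<Rightarrow> real). lp_feasible M n s0 r q}"
  proof (intro equalityI subsetI)
    fix v assume "v \<in> success_prob M n N PS ` {Z :: 'x list \<Rightarrow> nat \<Rightarrow> nat \<Rightarrow> 's list \<Rightarrow> 'y list \<Rightarrow> real. ns_ca_scheme M n Z}"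
    then obtain Z :: "'x list \<Rightarrow> nat \<Rightarrow> nat \<Rightarrow> 's list \<Rightarrow> 'y list \<Rightarrow> real"
      where Z: "ns_ca_scheme M n Z" and v: "v = success_prob M n N PS Z" by blast
    obtain r q where "lp_feasible M n s0 r q" "success_prob M n N PS Z = lp_objective n N PS r"
      using dir1[OF Z assms(2), of s0 N PS] by blast
    then show "v \<in> (\<lambda>(r, q). lp_objective n N PS r) `
          {(r :: 'x list \<Rightarrow> 'y list \<Rightarrow> 's list \<Rightarrow> real, q :: 'x list \<Rightarrow> 's list \<Rightarrow> real). lp_feasible M n s0 r q}"
      using v by force
  next
    fix v assume "v \<in> (\<lambda>(r, q). lp_objective n N PS r) `
          {(r :: 'x list \<Rightarrow> 'y list \<Rightarrow> 's list \<Rightarrow> real, q :: 'x list \<Rightarrow> 's list \<Rightarrow> real). lp_feasible M n s0 r q}"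
    then obtain r :: "'x list \<Rightarrow> 'y list \<Rightarrow> 's list \<Rightarrow> real" and q :: "'x list \<Rightarrow> 's list \<Rightarrow> real"
      where F: "lp_feasible M n s0 r q" and v: "v = lp_objective n N PS r" by auto
    obtain Z where "ns_ca_scheme M n Z" "success_prob M n N PS Z = lp_objective n N PS r"
      using dir2[OF F assms(2), of N PS] by blast
    then show "v \<in> success_prob M n N PS ` {Z :: 'x list \<Rightarrow> nat \<Rightarrow> nat \<Rightarrow> 's list \<Rightarrow> 'y list \<Rightarrow> real. ns_ca_scheme M n Z}"
      using v by force
  qed
  then show ?thesis unfolding eta_opt_ns_ca_def lp_value_def by simp
qed

end
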